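(* In the setting of the context, define the operators on $\mathbb{C}^{2^n}$ $$\hat A:=\sum_{j=0}^{2^n-1}\sum_{q=0}^{2^n-1}\langle\phi_q|\chi_j\rangle\,e^{-i\theta_j}\,|q\rangle\langle j|,$$ $$\hat A':=\sum_{c_1=0}^{d-1}\sum_{c_2=0}^{d-1}\ \sum_{j:(0,j)\in V(G^{(c_1,c_2)})}\ \frac{1}{2^B}\sum_{b=0}^{2^B-1} g(j,c_1,b)\,e^{i\arg\langle\phi_{f(0,j,c_1)}|\chi_j\rangle-i\theta_j}\,|f(0,j,c_1)\rangle\langle j|,$$ where $g(j,c_1,b)=1$ if $b<k_{j,f(0,j,c_1)}$ and $g(j,c_1,b)=(-1)^b$ otherwise. Then $$\|\hat A'-\hat A\|\le\frac{2d^2}{2^B},$$ where $\|\cdot\|$ is the spectral norm.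
   Context: $n,d,B$ are positive integers. $\{|\chi_j\rangle\}_{j=0}^{2^n-1}$ and $\{|\phi_q\rangle\}_{q=0}^{2^n-1}$ are orthonormal bases of $\mathbb{C}^{2^n}$, $\{|j\rangle\}$ denotes the computational basis, and $\theta_j\in\mathbb{R}$ are arbitrary phases. $d$-sparsity: for every $j$ at most $d$ indices $q$ have $\langle\phi_q|\chi_j\rangle\ne0$, and for every $q$ at most $d$ indices $j$ have $\langle\phi_q|\chi_j\rangle\ne0$. Padded index function $f$: for fixed $j$, list all $q$ with $\langle\phi_q|\chi_j\rangle\ne0$ in increasing order, padded by further distinct indices to exactly $d$ distinct entries, and let $f(0,j,p)$ be the $p$-th entry ($p=0,\dots,d-1$); symmetrically $f(1,q,p)$ is the $p$-th entry of the padded increasing list of $j$ with $\langle\phi_q|\chi_j\rangle\ne0$. Graph $G$: bipartite with vertices $\{0,1\}\times\{0,\dots,2^n-1\}$ and edges $((0,j),(1,q))$ whenever $\langle\phi_q|\chi_j\rangle\ne0$; the edge $((0,j),(1,q))$ has colour $(c_1,c_2)$ where $f(0,j,c_1)=q$ and $f(1,q,c_2)=j$. $G^{(c_1,c_2)}$ is the subgraph formed by edges of colour $(c_1,c_2)$, and $V(G^{(c_1,c_2)})$ is the set of vertices incident to such edges. $\arg$ of a nonzero complex number is its argument. For each pair $(j,q)$, $k_{j,q}\in\{0,1,\dots,2^B\}$ is a $B$-bit rounding of $2^B|\langle\phi_q|\chi_j\rangle|$, i.e. an integer with $\bigl|2^B|\langle\phi_q|\chi_j\rangle|-k_{j,q}\bigr|\le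 1$. *)

theory Defs
  imports "HOL-Analysis.Analysis"
begin

text \<open>Vectors of C^N are represented as functions nat => complex, only indices < N
  being relevant; a family of vectors is nat => nat => complex (vector index, component).
  Operators on C^N are matrices nat => nat => complex (row, column), indices < N.\<close>

definition braket :: "nat \<Rightarrow> (nat \<Rightarrow> complex) \<Rightarrow> (nat \<Rightarrow> complex) \<Rightarrow> complex" where
  "braket N a b = (\<Sum>k<N. cnj (a k) * b k)"

definition orthonormal_basis :: "nat \<Rightarrow> (nat \<Rightarrow> nat \<Rightarrow> complex) \<Rightarrow> bool" where
  "orthonormal_basis N v \<longleftrightarrow>
     (\<forall>i<N. \<forall>j<N. braket N (v i) (v j) = (if i = j then 1 else 0))"

definition overlap :: "nat \<Rightarrow> (nat \<Rightarrow> nat \<Rightarrow> complex) \<Rightarrow> (nat \<Rightarrow> nat \<Rightarrow> complex) \<Rightarrow> nat \<Rightarrow> nat \<Rightarrow> complex" where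
  "overlap N phi chi q j = braket N (phi q) (chi j)"

definition d_sparse :: "nat \<Rightarrow> nat \<Rightarrow> (nat \<Rightarrow> nat \<Rightarrow> complex) \<Rightarrow> (nat \<Rightarrow> nat \<Rightarrow> complex) \<Rightarrow> bool" where
  "d_sparse N d phi chi \<longleftrightarrow>
     (\<forall>j<N. card {q. q < N \<and> overlap N phi chi q j \<noteq> 0} \<le> d) \<and>
     (\<forall>q<N. card {j. j < N \<and> overlap N phi chi q j \<noteq> 0} \<le> d)"

definition padded_index :: "nat \<Rightarrow> nat \<Rightarrow> (nat \<Rightarrow> nat \<Rightarrow> complex) \<Rightarrow> (nat \<Rightarrow> nat \<Rightarrow> complex)
    \<Rightarrow> (nat \<Rightarrow> nat \<Rightarrow> nat \<Rightarrow> nat) \<Rightarrow> bool" where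
  "padded_index N d phi chi f \<longleftrightarrow>
     (\<forall>j<N. let S = {q. q < N \<and> overlap N phi chi q j \<noteq> 0};
               L = map (f 0 j) [0..<d]
           in distinct L \<and> take (card S) L = sorted_list_of_set S) \<and>
     (\<forall>q<N. let S = {j. j < N \<and> overlap N phi chi q j \<noteq> 0};
               L = map (f 1 q) [0..<d]
           in distinct L \<and> take (card S) L = sorted_list_of_set S)"

text \<open>(0,j) is in V(G^(c1,c2)): some edge ((0,j),(1,q)) of colour (c1,c2) exists.\<close>
definition in_V0 :: "nat \<Rightarrow> (nat \<Rightarrow> nat \<Rightarrow> complex) \<Rightarrow> (nat \<Rightarrow> nat \<Rightarrow> complex)
    \<Rightarrow> (nat \<Rightarrow> nat \<Rightarrow> nat \<Rightarrow> nat) \<Rightarrow> nat \<Rightarrow> nat \<Rightarrow> nat \<Rightarrow> bool" where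
  "in_V0 N phi chi f c1 c2 j \<longleftrightarrow>
     (\<exists>q<N. overlap N phi chi q j \<noteq> 0 \<and> f 0 j c1 = q \<and> f 1 q c2 = j)"

definition ketbra :: "nat \<Rightarrow> nat \<Rightarrow> nat \<Rightarrow> nat \<Rightarrow> complex" where
  "ketbra a b = (\<lambda>r c. if r = a \<and> c = b then 1 else 0)"

definition A_hat :: "nat \<Rightarrow> (nat \<Rightarrow> nat \<Rightarrow> complex) \<Rightarrow> (nat \<Rightarrow> nat \<Rightarrow> complex) \<Rightarrow> (nat \<Rightarrow> real)
    \<Rightarrow> nat \<Rightarrow> nat \<Rightarrow> complex" where
  "A_hat N phi chi theta = (\<lambda>r c. \<Sum>j<N. \<Sum>q<N.
      overlap N phi chi q j * exp (- \<i> * complex_of_real (theta j)) * ketbra q j r c)"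

definition g_fun :: "(nat \<Rightarrow> nat \<Rightarrow> nat) \<Rightarrow> (nat \<Rightarrow> nat \<Rightarrow> nat \<Rightarrow> nat) \<Rightarrow> nat \<Rightarrow> nat \<Rightarrow> nat \<Rightarrow> complex" where
  "g_fun k f j c1 b = (if b < k j (f 0 j c1) then 1 else (-1) ^ b)"

definition A_prime :: "nat \<Rightarrow> nat \<Rightarrow> nat \<Rightarrow> (nat \<Rightarrow> nat \<Rightarrow> complex) \<Rightarrow> (nat \<Rightarrow> nat \<Rightarrow> complex)
    \<Rightarrow> (nat \<Rightarrow> real) \<Rightarrow> (nat \<Rightarrow> nat \<Rightarrow> nat \<Rightarrow> nat) \<Rightarrow> (nat \<Rightarrow> nat \<Rightarrow> nat) \<Rightarrow> nat \<Rightarrow> nat \<Rightarrow> complex" where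
  "A_prime N d B phi chi theta f k = (\<lambda>r c.
     \<Sum>c1<d. \<Sum>c2<d. \<Sum>j\<in>{j. j < N \<and> in_V0 N phi chi f c1 c2 j}.
       (1 / 2 ^ B) * (\<Sum>b<2 ^ B. g_fun k f j c1 b)
       * exp (\<i> * complex_of_real (Arg (overlap N phi chi (f 0 j c1) j)) - \<i> * complex_of_real (theta j))
       * ketbra (f 0 j c1) j r c)"

definition spec_norm :: "nat \<Rightarrow> (nat \<Rightarrow> nat \<Rightarrow> complex) \<Rightarrow> real" where
  "spec_norm N M = Sup {sqrt (\<Sum>r<N. (cmod (\<Sum>c<N. M r c * v c))\<^sup>2) | v.
                          (\<Sum>c<N. (cmod (v c))\<^sup>2) \<le> 1}"

end

theory Submission
  imports Defs
begin


lemma schur_row: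
  fixes M :: "nat \<Rightarrow> nat \<Rightarrow> complex" and v :: "nat \<Rightarrow> complex"
  assumes eps: "\<forall>c<N. cmod (M r c) \<le> \<epsilon>" and e0: "0 \<le> \<epsilon>"
    and R: "card {c. c<N \<and> M r c \<noteq> 0} \<le> d"
  shows "(cmod (\<Sum>c<N. M r c * v c))\<^sup>2 \<le> \<epsilon>\<^sup>2 * d * (\<Sum>c<N. if M r c \<noteq> 0 then (cmod (v c))\<^sup>2 else 0)"
proof -
  define S where "S = {c. c<N \<and> M r c \<noteq> 0}"
  have fS: "finite S" unfolding S_def by auto
  have "(\<Sum>c<N. M r c * v c) = (\<Sum>c\<in>S. M r c * v c)"
    by (rule sum.mono_neutral_cong_right) (auto simp: S_def)
  hence "cmod (\<Sum>c<N. M r c * v c) \<le> (\<Sum>c\<in>S. cmod (M r c) * cmod (v c))"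
    using norm_sum[of "\<lambda>c. M r c * v c" S] by (simp add: norm_mult)
  also have "\<dots> \<le> (\<Sum>c\<in>S. \<epsilon> * cmod (v c))"
    by (rule sum_mono) (use eps in \<open>auto simp: S_def intro!: mult_right_mono\<close>)
  finally have a: "cmod (\<Sum>c<N. M r c * v c) \<le> (\<Sum>c\<in>S. \<epsilon> * cmod (v c))" .
  have b: "(\<Sum>c\<in>S. \<epsilon> * cmod (v c))\<^sup>2 \<le> (\<Sum>c\<in>S. (\<epsilon> * cmod (v c))\<^sup>2) * card S"
    by (rule sum_squared_le_sum_of_squares)
  have c: "(\<Sum>c\<in>S. (\<epsilon> * cmod (v c))\<^sup>2) * card S \<le> (\<Sum>c\<in>S. (\<epsilon> * cmod (v c))\<^sup>2) * d"
    using R by (intro mult_left_mono) (auto simp: S_def intro: sum_nonneg)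
  have e: "(\<Sum>c\<in>S. (\<epsilon> * cmod (v c))\<^sup>2) = \<epsilon>\<^sup>2 * (\<Sum>c\<in>S. (cmod (v c))\<^sup>2)"
    by (simp add: power_mult_distrib sum_distrib_left)
  have f: "(\<Sum>c\<in>S. (cmod (v c))\<^sup>2) = (\<Sum>c<N. if M r c \<noteq> 0 then (cmod (v c))\<^sup>2 else 0)"
    by (rule sum.mono_neutral_cong_left) (auto simp: S_def)
  have g: "(cmod (\<Sum>c<N. M r c * v c))\<^sup>2 \<le> (\<Sum>c\<in>S. \<epsilon> * cmod (v c))\<^sup>2"
    using a by (simp add: power_mono)
  have h: "(\<Sum>c\<in>S. (\<epsilon> * cmod (v c))\<^sup>2) * d = \<epsilon>\<^sup>2 * d * (\<Sum>c<N. if M r c \<noteq> 0 then (cmod (v c))\<^sup>2 else 0)"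
    unfolding e f by (simp only: mult_ac)
  show ?thesis using b c g h by linarith
qed

lemma schur:
  fixes M :: "nat \<Rightarrow> nat \<Rightarrow> complex"
  assumes eps: "\<forall>r<N. \<forall>c<N. cmod (M r c) \<le> \<epsilon>" and e0: "0 \<le> \<epsilon>"
    and R: "\<forall>r<N. card {c. c<N \<and> M r c \<noteq> 0} \<le> d"
    and C: "\<forall>c<N. card {r. r<N \<and> M r c \<noteq> 0} \<le> d"
  shows "spec_norm N M \<le> \<epsilon> * d"
  unfolding spec_norm_def
proof (rule cSup_least)
  show "{sqrt (\<Sum>r<N. (cmod (\<Sum>c<N. M r c * v c))\<^sup>2) |v. (\<Sum>c<N. (cmod (v c))\<^sup>2) \<le> 1} \<noteq> {}"
  proof -
    have "sqrt (\<Sum>r<N. (cmod (\<Sum>c<N. M r c * (\<lambda>_. 0) c))\<^sup>2) \<in> {sqrt (\<Sum>r<N. (cmod (\<Sum>c<N. M r c * v c))\<^sup>2) |v. (\<Sum>c<N. (cmod (v c))\<^sup>2) \<le> 1}"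
      by (rule CollectI, rule exI[of _ "\<lambda>_. 0"]) simp
    thus ?thesis by blast
  qed
next
  fix x assume "x \<in> {sqrt (\<Sum>r<N. (cmod (\<Sum>c<N. M r c * v c))\<^sup>2) |v. (\<Sum>c<N. (cmod (v c))\<^sup>2) \<le> 1}"
  then obtain v where x: "x = sqrt (\<Sum>r<N. (cmod (\<Sum>c<N. M r c * v c))\<^sup>2)"
    and v1: "(\<Sum>c<N. (cmod (v c))\<^sup>2) \<le> 1" by auto
  define W where "W = (\<Sum>r<N. \<Sum>c<N. if M r c \<noteq> 0 then (cmod (v c))\<^sup>2 else 0)"
  have s1: "(\<Sum>r<N. (cmod (\<Sum>c<N. M r c * v c))\<^sup>2)
     \<le> (\<Sum>r<N. \<epsilon>\<^sup>2 * d * (\<Sum>c<N. if M r c \<noteq> 0 then (cmod (v c))\<^sup>2 else 0))"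
    apply (rule sum_mono)
    apply (rule schur_row)
    using eps e0 R by auto
  have s2: "(\<Sum>r<N. \<epsilon>\<^sup>2 * d * (\<Sum>c<N. if M r c \<noteq> 0 then (cmod (v c))\<^sup>2 else 0)) = \<epsilon>\<^sup>2 * d * W"
    unfolding W_def by (simp add: sum_distrib_left)
  have "W = (\<Sum>c<N. \<Sum>r<N. if M r c \<noteq> 0 then (cmod (v c))\<^sup>2 else 0)"
    unfolding W_def by (rule sum.swap)
  also have "\<dots> = (\<Sum>c<N. card {r. r<N \<and> M r c \<noteq> 0} * (cmod (v c))\<^sup>2)"
  proof (rule sum.cong[OF refl])
    fix c
    have "(\<Sum>r<N. if M r c \<noteq> 0 then (cmod (v c))\<^sup>2 else 0) = (\<Sum>r\<in>{r. r<N \<and> M r c \<noteq> 0}. (cmod (v c))\<^sup>2)"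
      by (rule sum.mono_neutral_cong_left[symmetric]) auto
    then show "(\<Sum>r<N. if M r c \<noteq> 0 then (cmod (v c))\<^sup>2 else 0) = card {r. r<N \<and> M r c \<noteq> 0} * (cmod (v c))\<^sup>2"
      by simp
  qed
  also have "\<dots> \<le> (\<Sum>c<N. d * (cmod (v c))\<^sup>2)"
    by (rule sum_mono) (use C in \<open>auto intro!: mult_right_mono\<close>)
  also have "\<dots> = d * (\<Sum>c<N. (cmod (v c))\<^sup>2)" by (simp add: sum_distrib_left)
  also have "\<dots> \<le> d" using v1 by (simp add: mult_left_le)
  finally have s3: "W \<le> d" .
  have "\<epsilon>\<^sup>2 * d * W \<le> \<epsilon>\<^sup>2 * d * d"
    using s3 by (intro mult_left_mono) auto
  hence "(\<Sum>r<N. (cmod (\<Sum>c<N. M r c * v c))\<^sup>2) \<le> \<epsilon>\<^sup>2 * d * d"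
    using s1 s2 by linarith
  hence "x \<le> sqrt ((\<epsilon> * d)\<^sup>2)" unfolding x
    by (intro real_sqrt_le_mono) (simp add: power2_eq_square mult_ac)
  thus "x \<le> \<epsilon> * d" using e0 by simp
qed



lemma sum_g_aux:
  assumes "K \<le> m"
  shows "(\<Sum>b<m. (if b < K then 1 else (-1)^b :: complex))
         = of_int (int K + (if even K then 1 else -1) * int ((m - K) mod 2))"
  using assms
proof (induction m rule: dec_induct)
  case base
  then show ?case by simp
next
  case (step m)
  have p: "(-1::complex)^m = of_int ((if even K then 1 else -1) * (int ((Suc m - K) mod 2) - int ((m - K) mod 2)))"
  proof -
    have e: "Suc m - K = Suc (m - K)" using step.hyps(1) by simp
    have d: "even (m - K) = (even m = even K)" using step.hyps(1) by (auto simp: even_diff_nat)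
    have m1: "(m - K) mod 2 = (if even (m - K) then 0 else 1)" by (simp add: even_iff_mod_2_eq_zero odd_iff_mod_2_eq_one)
    have m2: "Suc (m - K) mod 2 = (if even (m - K) then 1 else 0)" by (simp add: mod_Suc even_iff_mod_2_eq_zero odd_iff_mod_2_eq_one)
    show ?thesis
      unfolding e m1 m2 d
      by (cases "even K"; cases "even m") simp_all
  qed
  show ?case using step.hyps step.IH
    by (simp add: p algebra_simps)
qed

lemma sum_g_even:
  assumes "K \<le> 2 ^ B" "0 < B"
  shows "(\<Sum>b<(2::nat)^B. (if b < K then 1 else (-1)^b :: complex)) = of_int (int K - int (K mod 2))"
proof -
  have ev: "even ((2::nat)^B)" using assms(2) by simp
  have "even (2^B - K) = even K" using ev assms(1) by (auto simp: even_diff_nat)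
  hence "(2^B - K) mod 2 = K mod 2"
    by (cases "even K") (simp_all add: even_iff_mod_2_eq_zero odd_iff_mod_2_eq_one)
  then show ?thesis using sum_g_aux[OF assms(1)]
    by (cases "even K") (auto simp: even_iff_mod_2_eq_zero odd_iff_mod_2_eq_one)
qed



lemma pad0:
  assumes "padded_index N d phi chi f" "c < N"
  shows "inj_on (f 0 c) {..<d}"
    and "r < N \<Longrightarrow> overlap N phi chi r c \<noteq> 0 \<Longrightarrow> \<exists>c1<d. f 0 c c1 = r"
proof -
  define S where "S = {q. q < N \<and> overlap N phi chi q c \<noteq> 0}"
  define L where "L = map (f 0 c) [0..<d]"
  have h: "distinct L \<and> take (card S) L = sorted_list_of_set S"
    using assms unfolding padded_index_def S_def L_def Let_def by blast
  then show "inj_on (f 0 c) {..<d}" unfolding L_def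
    by (simp add: distinct_map atLeast0LessThan)
  assume "r < N" "overlap N phi chi r c \<noteq> 0"
  then have "r \<in> S" by (simp add: S_def)
  then have "r \<in> set (sorted_list_of_set S)" by (simp add: S_def)
  then have "r \<in> set L" using h by (metis in_set_takeD)
  then show "\<exists>c1<d. f 0 c c1 = r" by (auto simp: L_def)
qed

lemma pad1:
  assumes "padded_index N d phi chi f" "r < N"
  shows "inj_on (f 1 r) {..<d}"
    and "c < N \<Longrightarrow> overlap N phi chi r c \<noteq> 0 \<Longrightarrow> \<exists>c2<d. f 1 r c2 = c"
proof -
  define S where "S = {j. j < N \<and> overlap N phi chi r j \<noteq> 0}"
  define L where "L = map (f 1 r) [0..<d]"
  have h: "distinct L \<and> take (card S) L = sorted_list_of_set S"
    using assms unfolding padded_index_def S_def L_def Let_def by blast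
  then show "inj_on (f 1 r) {..<d}" unfolding L_def
    by (simp add: distinct_map atLeast0LessThan)
  assume "c < N" "overlap N phi chi r c \<noteq> 0"
  then have "c \<in> S" by (simp add: S_def)
  then have "c \<in> set (sorted_list_of_set S)" by (simp add: S_def)
  then have "c \<in> set L" using h by (metis in_set_takeD)
  then show "\<exists>c2<d. f 1 r c2 = c" by (auto simp: L_def)
qed

lemma sum_unique:
  fixes Y :: "'a::comm_monoid_add" and d :: nat
  assumes "inj_on p {..<d}" "\<exists>c1<d. p c1 = r"
  shows "(\<Sum>c1<d. if p c1 = r then Y else 0) = Y"
proof -
  obtain c0 where c0: "c0 < d" "p c0 = r" using assms(2) by blast
  have "(\<Sum>c1<d. if p c1 = r then Y else 0) = (\<Sum>c1<d. if c1 = c0 then Y else 0)"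
    using assms(1) c0 by (intro sum.cong refl) (auto dest: inj_onD)
  also have "\<dots> = Y" using c0 by (subst sum.delta) simp_all
  finally show ?thesis .
qed

lemma mult_if0: "(x::complex) * (if P then 1 else 0) = (if P then x else 0)" by simp

lemma A_hat_entry:
  assumes "r < N" "c < N"
  shows "A_hat N phi chi theta r c = overlap N phi chi r c * exp (- \<i> * complex_of_real (theta c))"
proof -
  have "A_hat N phi chi theta r c = (\<Sum>j<N. if j = c then (\<Sum>q<N. if q = r then
          overlap N phi chi q j * exp (- \<i> * complex_of_real (theta j)) else 0) else 0)"
    unfolding A_hat_def ketbra_def mult_if0 by (intro sum.cong refl) auto
  also have "\<dots> = (\<Sum>q<N. if q = r then
          overlap N phi chi q c * exp (- \<i> * complex_of_real (theta c)) else 0)"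
    using assms sum.delta[of "{..<N}" c "\<lambda>j. (\<Sum>q<N. if q = r then
          overlap N phi chi q j * exp (- \<i> * complex_of_real (theta j)) else 0)"] by simp
  also have "\<dots> = overlap N phi chi r c * exp (- \<i> * complex_of_real (theta c))"
    using assms sum.delta[of "{..<N}" r "\<lambda>q. overlap N phi chi q c * exp (- \<i> * complex_of_real (theta c))"] by simp
  finally show ?thesis .
qed

lemma A_prime_entry:
  assumes pad: "padded_index N d phi chi f" and rc: "r < N" "c < N"
  shows "A_prime N d B phi chi theta f k r c =
    (if overlap N phi chi r c \<noteq> 0 then (1 / 2 ^ B) * (\<Sum>b<2 ^ B. if b < k c r then 1 else (-1) ^ b)
       * exp (\<i> * complex_of_real (Arg (overlap N phi chi r c)) - \<i> * complex_of_real (theta c)) else 0)"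
proof -
  define X where "X = (1 / 2 ^ B) * (\<Sum>b<2 ^ B. if b < k c r then 1 else (-1) ^ b)
       * exp (\<i> * complex_of_real (Arg (overlap N phi chi r c)) - \<i> * complex_of_real (theta c))"
  have step1: "(\<Sum>j\<in>{j. j < N \<and> in_V0 N phi chi f c1 c2 j}.
       (1 / 2 ^ B) * (\<Sum>b<2 ^ B. g_fun k f j c1 b)
       * exp (\<i> * complex_of_real (Arg (overlap N phi chi (f 0 j c1) j)) - \<i> * complex_of_real (theta j))
       * ketbra (f 0 j c1) j r c)
     = (if f 0 c c1 = r \<and> f 1 r c2 = c \<and> overlap N phi chi r c \<noteq> 0 then X else 0)" for c1 c2
  proof -
    have "(\<Sum>j\<in>{j. j < N \<and> in_V0 N phi chi f c1 c2 j}.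
       (1 / 2 ^ B) * (\<Sum>b<2 ^ B. g_fun k f j c1 b)
       * exp (\<i> * complex_of_real (Arg (overlap N phi chi (f 0 j c1) j)) - \<i> * complex_of_real (theta j))
       * ketbra (f 0 j c1) j r c)
      = (\<Sum>j\<in>{j. j < N \<and> in_V0 N phi chi f c1 c2 j}. if j = c then
         (if f 0 c c1 = r then (1 / 2 ^ B) * (\<Sum>b<2 ^ B. g_fun k f c c1 b)
       * exp (\<i> * complex_of_real (Arg (overlap N phi chi (f 0 c c1) c)) - \<i> * complex_of_real (theta c)) else 0) else 0)"
      unfolding ketbra_def by (intro sum.cong refl) auto
    also have "\<dots> = (if in_V0 N phi chi f c1 c2 c \<and> f 0 c c1 = r then (1 / 2 ^ B) * (\<Sum>b<2 ^ B. g_fun k f c c1 b)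
       * exp (\<i> * complex_of_real (Arg (overlap N phi chi (f 0 c c1) c)) - \<i> * complex_of_real (theta c)) else 0)"
      using rc by (simp add: sum.delta)
    also have "\<dots> = (if f 0 c c1 = r \<and> f 1 r c2 = c \<and> overlap N phi chi r c \<noteq> 0 then X else 0)"
      using rc by (auto simp: in_V0_def X_def g_fun_def)
    finally show ?thesis .
  qed
  have "A_prime N d B phi chi theta f k r c =
     (\<Sum>c1<d. \<Sum>c2<d. if f 0 c c1 = r \<and> f 1 r c2 = c \<and> overlap N phi chi r c \<noteq> 0 then X else 0)"
    unfolding A_prime_def by (simp only: step1)
  also have "\<dots> = (if overlap N phi chi r c \<noteq> 0 then X else 0)"
  proof (cases "overlap N phi chi r c \<noteq> 0")
    case True
    have "(\<Sum>c1<d. \<Sum>c2<d. if f 0 c c1 = r \<and> f 1 r c2 = c \<and> overlap N phi chi r c \<noteq> 0 then X else 0)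
        = (\<Sum>c1<d. if f 0 c c1 = r then (\<Sum>c2<d. if f 1 r c2 = c then X else 0) else 0)"
      using True by (intro sum.cong refl) auto
    also have "\<dots> = (\<Sum>c1<d. if f 0 c c1 = r then X else 0)"
    proof -
      have u: "(\<Sum>c2<d. if f 1 r c2 = c then X else 0) = X"
        by (rule sum_unique[OF pad1(1)[OF pad rc(1)] pad1(2)[OF pad rc True]])
      show ?thesis by (simp only: u)
    qed
    also have "\<dots> = X"
      by (rule sum_unique[OF pad0(1)[OF pad rc(2)] pad0(2)[OF pad rc(2) rc(1) True]])
    finally show ?thesis using True by simp
  qed simp
  finally show ?thesis unfolding X_def .
qed



lemma entry_bound:
  fixes z :: complex and K B :: nat and t :: real
  assumes B: "0 < B" and K: "K \<le> 2 ^ B" and err: "\<bar>2 ^ B * cmod z - real K\<bar> \<le> 1"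
  shows "cmod ((1 / 2 ^ B) * (\<Sum>b<2 ^ B. if b < K then 1 else (-1) ^ b)
       * exp (\<i> * complex_of_real (Arg z) - \<i> * complex_of_real t) - z * exp (- \<i> * complex_of_real t))
      \<le> 2 / 2 ^ B"
proof -
  define a :: real where "a = (real K - real (K mod 2)) / 2 ^ B"
  define u where "u = exp (\<i> * complex_of_real (Arg z))"
  define w where "w = exp (- \<i> * complex_of_real t)"
  have s: "(\<Sum>b<(2::nat) ^ B. if b < K then 1 else (-1) ^ b :: complex) = of_int (int K - int (K mod 2))"
    by (rule sum_g_even[OF K B])
  have s': "(1 / 2 ^ B) * (\<Sum>b<(2::nat) ^ B. if b < K then 1 else (-1) ^ b :: complex) = complex_of_real a"
    unfolding s a_def by (simp add: of_nat_diff)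
  have e: "exp (\<i> * complex_of_real (Arg z) - \<i> * complex_of_real t) = u * w"
    unfolding u_def w_def by (simp add: exp_add[symmetric])
  have zz: "z = complex_of_real (cmod z) * u"
    unfolding u_def by (metis rcis_cmod_Arg rcis_def cis_conv_exp)
  have nu: "cmod u = 1" unfolding u_def by simp
  have nw: "cmod w = 1" unfolding w_def by simp
  have "(1 / 2 ^ B) * (\<Sum>b<2 ^ B. if b < K then 1 else (-1) ^ b)
       * exp (\<i> * complex_of_real (Arg z) - \<i> * complex_of_real t) - z * exp (- \<i> * complex_of_real t)
      = complex_of_real (a - cmod z) * (u * w)"
    using s' e zz unfolding w_def[symmetric] by (simp add: algebra_simps)
  hence "cmod ((1 / 2 ^ B) * (\<Sum>b<2 ^ B. if b < K then 1 else (-1) ^ b)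
       * exp (\<i> * complex_of_real (Arg z) - \<i> * complex_of_real t) - z * exp (- \<i> * complex_of_real t))
      = \<bar>a - cmod z\<bar>"
    by (simp add: norm_mult nu nw del: of_real_diff)
  also have "\<dots> \<le> 2 / 2 ^ B"
  proof -
    have m: "real (K mod 2) \<le> 1" by simp
    have p: "(0::real) < 2 ^ B" by simp
    have "\<bar>a - cmod z\<bar> * 2 ^ B = \<bar>real K - real (K mod 2) - 2 ^ B * cmod z\<bar>"
      unfolding a_def using p by (simp add: abs_mult[symmetric] field_simps)
    also have "\<dots> \<le> 2" using err m by (simp add: abs_le_iff)
    finally show ?thesis using p by (simp add: field_simps)
  qed
  finally show ?thesis .
qed


theorem mainTheorem3:
  fixes n d B :: nat
    and chi phi :: "nat \<Rightarrow> nat \<Rightarrow> complex"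
    and theta :: "nat \<Rightarrow> real"
    and f :: "nat \<Rightarrow> nat \<Rightarrow> nat \<Rightarrow> nat"
    and k :: "nat \<Rightarrow> nat \<Rightarrow> nat"
  assumes "0 < n" and "0 < d" and "0 < B"
    and "orthonormal_basis (2 ^ n) chi"
    and "orthonormal_basis (2 ^ n) phi"
    and "d_sparse (2 ^ n) d phi chi"
    and "padded_index (2 ^ n) d phi chi f"
    and "\<forall>j < 2 ^ n. \<forall>q < 2 ^ n. k j q \<le> 2 ^ B \<and>
           \<bar>2 ^ B * cmod (overlap (2 ^ n) phi chi q j) - real (k j q)\<bar> \<le> 1"
  shows "spec_norm (2 ^ n)
           (\<lambda>r c. A_prime (2 ^ n) d B phi chi theta f k r c - A_hat (2 ^ n) phi chi theta r c)
         \<le> 2 * real d ^ 2 / 2 ^ B"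
proof -
  note pad = assms(7)
  define M where "M = (\<lambda>r c. A_prime (2 ^ n) d B phi chi theta f k r c - A_hat (2 ^ n) phi chi theta r c)"
  have supp: "overlap (2 ^ n) phi chi r c \<noteq> 0" if "r < 2 ^ n" "c < 2 ^ n" "M r c \<noteq> 0" for r c
    using that A_prime_entry[OF pad that(1,2)] A_hat_entry[OF that(1,2)] unfolding M_def
    by (auto split: if_splits)
  have bnd: "cmod (M r c) \<le> 2 / 2 ^ B" if rc: "r < 2 ^ n" "c < 2 ^ n" for r c
  proof (cases "overlap (2 ^ n) phi chi r c = 0")
    case True
    then have "M r c = 0" using supp rc by blast
    then show ?thesis by simp
  next
    case False
    have kk: "k c r \<le> 2 ^ B" "\<bar>2 ^ B * cmod (overlap (2 ^ n) phi chi r c) - real (k c r)\<bar> \<le> 1"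
      using assms(8) rc by auto
    show ?thesis
      unfolding M_def A_prime_entry[OF pad rc] A_hat_entry[OF rc] using False
      by (simp only: if_True if_False not_False_eq_True) (rule entry_bound[OF assms(3) kk])
  qed
  have sp: "(\<forall>j<2 ^ n. card {q. q < 2 ^ n \<and> overlap (2 ^ n) phi chi q j \<noteq> 0} \<le> d) \<and>
     (\<forall>q<2 ^ n. card {j. j < 2 ^ n \<and> overlap (2 ^ n) phi chi q j \<noteq> 0} \<le> d)"
    using assms(6) unfolding d_sparse_def .
  have R: "\<forall>r<2 ^ n. card {c. c < 2 ^ n \<and> M r c \<noteq> 0} \<le> d"
  proof (intro allI impI)
    fix r :: nat assume r: "r < 2 ^ n"
    have "card {c. c < 2 ^ n \<and> M r c \<noteq> 0} \<le> card {j. j < 2 ^ n \<and> overlap (2 ^ n) phi chi r j \<noteq> 0}"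
      by (rule card_mono) (simp, use supp r in blast)
    also have "\<dots> \<le> d" using sp r by blast
    finally show "card {c. c < 2 ^ n \<and> M r c \<noteq> 0} \<le> d" .
  qed
  have C: "\<forall>c<2 ^ n. card {r. r < 2 ^ n \<and> M r c \<noteq> 0} \<le> d"
  proof (intro allI impI)
    fix c :: nat assume c: "c < 2 ^ n"
    have "card {r. r < 2 ^ n \<and> M r c \<noteq> 0} \<le> card {q. q < 2 ^ n \<and> overlap (2 ^ n) phi chi q c \<noteq> 0}"
      by (rule card_mono) (simp, use supp c in blast)
    also have "\<dots> \<le> d" using sp c by blast
    finally show "card {r. r < 2 ^ n \<and> M r c \<noteq> 0} \<le> d" .
  qed
  have "spec_norm (2 ^ n) M \<le> 2 / 2 ^ B * real d"
    by (rule schur) (use bnd R C in auto)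
  also have "\<dots> \<le> 2 * real d ^ 2 / 2 ^ B"
  proof -
    have "real d \<le> real d ^ 2" using assms(2) by (simp add: power2_eq_square)
    then show ?thesis by (simp add: divide_right_mono)
  qed
  finally show ?thesis unfolding M_def .
qed

end
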